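(* Let $m$ be a stack $\mathbb T$-automaton over a finite stack alphabet $\Gamma$ and finite input alphabet $A$, with finite state set $X$. Then for every $x_0\in X$ and $\gamma_0\in\Gamma$ the language $\{w\in A^*\mid \llbracket x_0\rrbracket_m(w)(\gamma_0)=1\}$ is a real-time deterministic context-free language. Conversely, for every real-time deterministic context-free language $\mathcal L\subseteq A^*$ there exist a stack $\mathbb T$-automaton $m$ (over some finite $\Gamma$), a state $x_0$ and a symbol $\gamma_0\in\Gamma$ such that $\mathcal L=\{w\in A^*\mid \llbracket x_0\rrbracket_m(w)(\gamma_0)=1\}$.
   Context: The stack monad over $\Gamma$: $TX$ is the set of maps $p=\langle r,t\rangle:\Gamma^*\to X\times\Gamma^*$ for which there is $k$ such that $r(wu)=r(w)$ and $t(wu)=t(w)u$ for all $w\in\Gamma^k$, $u\in\Gamma^*$; unit $\eta(x)(s)=(x,s)$; Kleisli extension $f^\dagger(p)(s)=f(r(s))(t(s))$. A stack $\mathbb T$-automaton consists of a finite set $X$ and maps $o^m:X\to B$, $t^m:A\times X\to TX$, where $B$ is the set of predicates $p\in 2^{\Gamma^*}$ for which there is $k$ with $p(wu)=p(w)$ whenever $|w|\ge k$, with the $\mathbb T$-algebra structure $a^m:TB\to B$, $a^m(\langle r,t\rangle)(s)=r(s)(t(s))$. Its trace semantics $\llbracket x\rrbracket_m:A^*\to B$ is given by the generalized powerset construction: equip $B\times(TX)^A$ with the componentwise $\mathbb T$-algebra structure, let $m^\sharp:TX\to B\times(TX)^A$ be the unique $\mathbb T$-algebra morphism with $m^\sharp(\eta(x))=(o^m(x),\lambda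 a.t^m(a,x))$, and let $\llbracket x\rrbracket_m(w)=o(\partial_w(\eta(x)))$ in this coalgebra ($\partial_\epsilon=\mathrm{id}$, $\partial_{aw}=\partial_w\circ\partial_a$). Equivalently $\llbracket x\rrbracket_m(\epsilon)=o^m(x)$ and $\llbracket x\rrbracket_m(au)(s)=\llbracket y\rrbracket_m(u)(s')$ where $(y,s')=t^m(a,x)(s)$. A real-time deterministic context-free language is a language accepted (by final state) by a deterministic pushdown automaton without $\epsilon$-transitions, i.e. one with transition function $\delta:Q\times A\times\Delta\to (Q\times\Delta^* )\cup\{\bot\}$ (finite $Q,\Delta$), an initial state, an initial stack symbol and a set of final states. *)

theory Defs
  imports Main
begin

definition inT :: "'x set \<Rightarrow> 'g set \<Rightarrow> ('g list \<Rightarrow> 'x \<times> 'g list) \<Rightarrow> bool" where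
  "inT X G p \<longleftrightarrow>
     (\<forall>s\<in>lists G. fst (p s) \<in> X \<and> snd (p s) \<in> lists G) \<and>
     (\<exists>k. \<forall>w\<in>lists G. \<forall>u\<in>lists G. length w = k \<longrightarrow>
            fst (p (w @ u)) = fst (p w) \<and> snd (p (w @ u)) = snd (p w) @ u)"

definition inB :: "'g set \<Rightarrow> ('g list \<Rightarrow> bool) \<Rightarrow> bool" where
  "inB G p \<longleftrightarrow> (\<exists>k. \<forall>w\<in>lists G. \<forall>u\<in>lists G. length w \<ge> k \<longrightarrow> p (w @ u) = p w)"

text \<open>A stack T-automaton: output o :: X \<Rightarrow> B and transition t :: A \<times> X \<Rightarrow> TX
  (input alphabet is the finite type 'a).\<close>
definition stack_aut ::
  "'x set \<Rightarrow> 'g set \<Rightarrow> ('x \<Rightarrow> 'g list \<Rightarrow> bool) \<Rightarrow> ('a \<Rightarrow> 'x \<Rightarrow> 'g list \<Rightarrow> 'x \<times> 'g list) \<Rightarrow> bool" where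
  "stack_aut X G om tm \<longleftrightarrow> finite X \<and> finite G \<and>
     (\<forall>x\<in>X. inB G (om x)) \<and> (\<forall>a. \<forall>x\<in>X. inT X G (tm a x))"

text \<open>Generalized powerset construction: the determinised coalgebra on TX.
  Output component: a^m (T o^m p);  transition component: Kleisli extension of t^m(a,-).\<close>
definition det_out :: "('x \<Rightarrow> 'g list \<Rightarrow> bool) \<Rightarrow> ('g list \<Rightarrow> 'x \<times> 'g list) \<Rightarrow> 'g list \<Rightarrow> bool" where
  "det_out om p = (\<lambda>s. om (fst (p s)) (snd (p s)))"

definition det_step :: "('a \<Rightarrow> 'x \<Rightarrow> 'g list \<Rightarrow> 'x \<times> 'g list) \<Rightarrow> 'a
     \<Rightarrow> ('g list \<Rightarrow> 'x \<times> 'g list) \<Rightarrow> ('g list \<Rightarrow> 'x \<times> 'g list)" where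
  "det_step tm a p = (\<lambda>s. tm a (fst (p s)) (snd (p s)))"

fun det_deriv :: "('a \<Rightarrow> 'x \<Rightarrow> 'g list \<Rightarrow> 'x \<times> 'g list) \<Rightarrow> 'a list
     \<Rightarrow> ('g list \<Rightarrow> 'x \<times> 'g list) \<Rightarrow> ('g list \<Rightarrow> 'x \<times> 'g list)" where
  "det_deriv tm [] p = p"
| "det_deriv tm (a # w) p = det_deriv tm w (det_step tm a p)"

definition trace_sem :: "('x \<Rightarrow> 'g list \<Rightarrow> bool) \<Rightarrow> ('a \<Rightarrow> 'x \<Rightarrow> 'g list \<Rightarrow> 'x \<times> 'g list)
     \<Rightarrow> 'x \<Rightarrow> 'a list \<Rightarrow> 'g list \<Rightarrow> bool" where
  "trace_sem om tm x w = det_out om (det_deriv tm w (\<lambda>s. (x, s)))"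

fun dpda_step :: "('q \<Rightarrow> 'a \<Rightarrow> 'd \<Rightarrow> ('q \<times> 'd list) option) \<Rightarrow> 'a
     \<Rightarrow> ('q \<times> 'd list) \<Rightarrow> ('q \<times> 'd list) option" where
  "dpda_step \<delta> a (q, []) = None"
| "dpda_step \<delta> a (q, z # s) = (case \<delta> q a z of None \<Rightarrow> None | Some (q', u) \<Rightarrow> Some (q', u @ s))"

fun dpda_run :: "('q \<Rightarrow> 'a \<Rightarrow> 'd \<Rightarrow> ('q \<times> 'd list) option) \<Rightarrow> 'a list
     \<Rightarrow> ('q \<times> 'd list) \<Rightarrow> ('q \<times> 'd list) option" where
  "dpda_run \<delta> [] c = Some c"
| "dpda_run \<delta> (a # w) c = (case dpda_step \<delta> a c of None \<Rightarrow> None | Some c' \<Rightarrow> dpda_run \<delta> w c')"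

definition dpda_lang :: "('q \<Rightarrow> 'a \<Rightarrow> 'd \<Rightarrow> ('q \<times> 'd list) option) \<Rightarrow> 'q \<Rightarrow> 'd \<Rightarrow> 'q set
     \<Rightarrow> 'a list set" where
  "dpda_lang \<delta> q0 z0 F = {w. case dpda_run \<delta> w (q0, [z0]) of None \<Rightarrow> False | Some (q, _) \<Rightarrow> q \<in> F}"

text \<open>Real-time DCFL: accepted by a real-time DPDA with finite state set Q and finite stack
  alphabet D (carriers taken inside nat, which is no loss of generality).\<close>
definition rt_dcfl :: "'a list set \<Rightarrow> bool" where
  "rt_dcfl L \<longleftrightarrow> (\<exists>(Q::nat set) (D::nat set) \<delta> q0 z0 F.
      finite Q \<and> finite D \<and> q0 \<in> Q \<and> z0 \<in> D \<and> F \<subseteq> Q \<and>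
      (\<forall>q\<in>Q. \<forall>a. \<forall>z\<in>D. case \<delta> q a z of None \<Rightarrow> True
                                     | Some (q', u) \<Rightarrow> q' \<in> Q \<and> set u \<subseteq> D) \<and>
      L = dpda_lang \<delta> q0 z0 F)"

end

theory Submission
  imports Defs
begin

fun tr :: "('a \<Rightarrow> 'x \<Rightarrow> 'g list \<Rightarrow> 'x \<times> 'g list) \<Rightarrow> 'a list \<Rightarrow> 'x \<times> 'g list \<Rightarrow> 'x \<times> 'g list" where
  "tr tm [] c = c"
| "tr tm (a # w) c = tr tm w (tm a (fst c) (snd c))"

lemma det_deriv_tr: "det_deriv tm w p s = tr tm w (p s)"
  by (induction w arbitrary: p) (auto simp: det_step_def)

lemma trace_sem_tr: "trace_sem om tm x w s = (let c = tr tm w (x, s) in om (fst c) (snd c))"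
  by (simp add: trace_sem_def det_out_def det_deriv_tr Let_def)

lemma run_closed:
  assumes cl: "\<forall>q\<in>Q. \<forall>a. \<forall>z\<in>D. case \<delta> q a z of None \<Rightarrow> True
                                     | Some (q', u) \<Rightarrow> q' \<in> Q \<and> set u \<subseteq> D"
  shows "q \<in> Q \<Longrightarrow> set s \<subseteq> D \<Longrightarrow> dpda_run \<delta> w (q, s) = Some (q', s') \<Longrightarrow> q' \<in> Q \<and> set s' \<subseteq> D"
proof (induction w arbitrary: q s)
  case Nil then show ?case by simp
next
  case (Cons a w)
  show ?case
  proof (cases s)
    case Nil with Cons show ?thesis by simp
  next
    case (Cons z s0)
    with Cons.prems have z: "z \<in> D" "set s0 \<subseteq> D" by auto
    show ?thesis
    proof (cases "\<delta> q a z")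
      case None with Cons Cons.prems show ?thesis by simp
    next
      case (Some r)
      obtain q1 u where r: "r = (q1, u)" by (cases r)
      have "q1 \<in> Q \<and> set u \<subseteq> D" proof -
          have "case \<delta> q a z of None \<Rightarrow> True | Some (q', u) \<Rightarrow> q' \<in> Q \<and> set u \<subseteq> D"
            using cl Cons.prems(1) z(1) by blast
          then show ?thesis using Some r by simp
        qed
        then have "q1 \<in> Q" "set u \<subseteq> D" by auto
      with Cons.IH[of q1 "u @ s0"] Cons.prems Some r \<open>s = z # s0\<close> z show ?thesis by simp
    qed
  qed
qed

lemma rename_rt:
  fixes Q :: "'q set" and D :: "'d set"
  assumes fin: "finite Q" "finite D" and q0: "q0 \<in> Q" and z0: "z0 \<in> D" and F: "F \<subseteq> Q"
  and cl: "\<forall>q\<in>Q. \<forall>a. \<forall>z\<in>D. case \<delta> q a z of None \<Rightarrow> True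
                                     | Some (q', u) \<Rightarrow> q' \<in> Q \<and> set u \<subseteq> D"
  shows "rt_dcfl (dpda_lang \<delta> q0 z0 F)"
proof -
  obtain f :: "'q \<Rightarrow> nat" and n where f: "f ` Q = {i. i < n}" "inj_on f Q"
    using finite_imp_inj_to_nat_seg[OF fin(1)] by blast
  obtain g :: "'d \<Rightarrow> nat" and m where g: "g ` D = {i. i < m}" "inj_on g D"
    using finite_imp_inj_to_nat_seg[OF fin(2)] by blast
  define \<delta>' where "\<delta>' = (\<lambda>i a j. if i \<in> f ` Q \<and> j \<in> g ` D then
     (case \<delta> (inv_into Q f i) a (inv_into D g j) of None \<Rightarrow> None
        | Some (q', u) \<Rightarrow> Some (f q', map g u)) else None)"
  have sim: "dpda_run \<delta>' w (f q, map g s) = map_option (\<lambda>(q, s). (f q, map g s)) (dpda_run \<delta> w (q, s))"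
    if "q \<in> Q" "set s \<subseteq> D" for w q s
    using that
  proof (induction w arbitrary: q s)
    case Nil then show ?case by simp
  next
    case (Cons a w)
    show ?case
    proof (cases s)
      case Nil with Cons show ?thesis by simp
    next
      case (Cons z s0)
      with Cons.prems have z: "z \<in> D" "set s0 \<subseteq> D" by auto
      have inv: "inv_into Q f (f q) = q" "inv_into D g (g z) = z"
        using f g Cons.prems z by (auto simp: inv_into_f_f)
      show ?thesis
      proof (cases "\<delta> q a z")
        case None with Cons Cons.prems inv z show ?thesis by (simp add: \<delta>'_def)
      next
        case (Some r)
        obtain q1 u where r: "r = (q1, u)" by (cases r)
        have "q1 \<in> Q \<and> set u \<subseteq> D" proof -
          have "case \<delta> q a z of None \<Rightarrow> True | Some (q', u) \<Rightarrow> q' \<in> Q \<and> set u \<subseteq> D"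
            using cl Cons.prems(1) z(1) by blast
          then show ?thesis using Some r by simp
        qed
        then have "q1 \<in> Q" "set u \<subseteq> D" by auto
        with Cons.IH[of q1 "u @ s0"] Cons.prems Some r \<open>s = z # s0\<close> z inv show ?thesis
          by (simp add: \<delta>'_def)
      qed
    qed
  qed
  have L: "dpda_lang \<delta> q0 z0 F = dpda_lang \<delta>' (f q0) (g z0) (f ` F)"
  proof -
    have "(case dpda_run \<delta> w (q0, [z0]) of None \<Rightarrow> False | Some (q, _) \<Rightarrow> q \<in> F) =
          (case dpda_run \<delta>' w (f q0, [g z0]) of None \<Rightarrow> False | Some (q, _) \<Rightarrow> q \<in> f ` F)" for w
    proof (cases "dpda_run \<delta> w (q0, [z0])")
      case None with sim[of q0 "[z0]" w] q0 z0 show ?thesis by simp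
    next
      case (Some c)
      obtain q s where c: "c = (q, s)" by (cases c)
      have "q \<in> Q" using run_closed[OF cl, of q0 "[z0]" w q s] q0 z0 Some c by auto
      then have "(f q \<in> f ` F) = (q \<in> F)" using F f(2) by (auto dest: inj_onD)
      with sim[of q0 "[z0]" w] q0 z0 Some c show ?thesis by simp
    qed
    then show ?thesis by (simp add: dpda_lang_def)
  qed
  have cl': "\<forall>q\<in>f ` Q. \<forall>a. \<forall>z\<in>g ` D. case \<delta>' q a z of None \<Rightarrow> True
                                     | Some (q', u) \<Rightarrow> q' \<in> f ` Q \<and> set u \<subseteq> g ` D"
  proof (intro ballI allI)
    fix i a j assume ij: "i \<in> f ` Q" "j \<in> g ` D"
    then obtain q z where qz: "q \<in> Q" "z \<in> D" "i = f q" "j = g z" by auto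
    have inv: "inv_into Q f (f q) = q" "inv_into D g (g z) = z"
      using f g qz by (auto simp: inv_into_f_f)
    show "case \<delta>' i a j of None \<Rightarrow> True | Some (q', u) \<Rightarrow> q' \<in> f ` Q \<and> set u \<subseteq> g ` D"
      using cl qz inv by (fastforce simp: \<delta>'_def split: option.splits)
  qed
  show ?thesis unfolding rt_dcfl_def
    apply (rule exI[of _ "f ` Q"], rule exI[of _ "g ` D"], rule exI[of _ \<delta>'],
           rule exI[of _ "f q0"], rule exI[of _ "g z0"], rule exI[of _ "f ` F"])
    using fin q0 z0 F cl' L by auto
qed


definition tm2 :: "(nat \<Rightarrow> 'a \<Rightarrow> nat \<Rightarrow> (nat \<times> nat list) option) \<Rightarrow> 'a \<Rightarrow> nat \<Rightarrow> nat list \<Rightarrow> nat \<times> nat list" where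
  "tm2 \<delta> a n s = (case n of 0 \<Rightarrow> (0, s) | Suc q \<Rightarrow> (case s of [] \<Rightarrow> (0, []) | z # s' \<Rightarrow>
      (case \<delta> q a z of None \<Rightarrow> (0, s) | Some (q', u) \<Rightarrow> (Suc q', u @ s'))))"

lemma tr2_zero: "fst (tr (tm2 \<delta>) w (0, s)) = 0"
  by (induction w arbitrary: s) (auto simp: tm2_def)

lemma tr2_run: "(case dpda_run \<delta> w (q, s) of None \<Rightarrow> fst (tr (tm2 \<delta>) w (Suc q, s)) = 0
     | Some (q', s') \<Rightarrow> tr (tm2 \<delta>) w (Suc q, s) = (Suc q', s'))"
proof (induction w arbitrary: q s)
  case Nil then show ?case by simp
next
  case (Cons a w)
  show ?case
  proof (cases s)
    case Nil then show ?thesis using tr2_zero by (simp add: tm2_def)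
  next
    case (Cons z s0)
    show ?thesis
    proof (cases "\<delta> q a z")
      case None then show ?thesis using tr2_zero Cons by (simp add: tm2_def)
    next
      case (Some r)
      obtain q1 u where r: "r = (q1, u)" by (cases r)
      have e: "tr (tm2 \<delta>) (a # w) (Suc q, z # s0) = tr (tm2 \<delta>) w (Suc q1, u @ s0)"
        using Some r by (simp add: tm2_def)
      have e2: "dpda_run \<delta> (a # w) (q, z # s0) = dpda_run \<delta> w (q1, u @ s0)"
        using Some r by simp
      show ?thesis unfolding \<open>s = z # s0\<close> e e2 by (rule Cons.IH)
    qed
  qed
qed

lemma rt_dcfl_E:
  assumes "rt_dcfl (L::'a list set)"
  obtains Q D q0 z0 F \<delta> where "finite Q" "finite D" "q0 \<in> Q" "z0 \<in> D" "F \<subseteq> Q"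
    "\<forall>q\<in>Q. \<forall>a. \<forall>z\<in>D. case \<delta> q a z of None \<Rightarrow> True
                                     | Some (q', u) \<Rightarrow> q' \<in> Q \<and> set u \<subseteq> (D::nat set)"
    "L = dpda_lang \<delta> (q0::nat) z0 F"
  using assms unfolding rt_dcfl_def by (elim exE conjE) (erule that, assumption+)

lemma dir2:
  fixes L :: "'a::finite list set"
  assumes "rt_dcfl L"
  shows "\<exists>(X::nat set) (G::nat set) om tm x0 \<gamma>0.
               stack_aut X G om tm \<and> x0 \<in> X \<and> \<gamma>0 \<in> G \<and>
               L = {w. trace_sem om tm x0 w [\<gamma>0]}"
proof -
  obtain Q D \<delta> q0 z0 F where fin: "finite (Q::nat set)" "finite (D::nat set)" and q0: "q0 \<in> Q" and z0: "z0 \<in> D"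
    and F: "F \<subseteq> Q"
    and cl: "\<forall>q\<in>Q. \<forall>a. \<forall>z\<in>D. case \<delta> q a z of None \<Rightarrow> True
                                     | Some (q', u) \<Rightarrow> q' \<in> Q \<and> set u \<subseteq> D"
    and L: "L = dpda_lang \<delta> q0 z0 F"
    by (rule rt_dcfl_E[OF assms])
  define X where "X = insert 0 (Suc ` Q)"
  define om :: "nat \<Rightarrow> nat list \<Rightarrow> bool" where "om = (\<lambda>n s. case n of 0 \<Rightarrow> False | Suc q \<Rightarrow> q \<in> F)"
  have inT: "inT X D (tm2 \<delta> a x)" if "x \<in> X" for a x
  proof (cases x)
    case 0
    have "\<And>s. tm2 \<delta> a x s = (0, s)" using 0 by (simp add: tm2_def)
    then show ?thesis unfolding inT_def X_def by (intro conjI ballI exI[of _ 0]) auto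
  next
    case (Suc q)
    with that have q: "q \<in> Q" by (auto simp: X_def)
    have c1: "fst (tm2 \<delta> a x s) \<in> X \<and> snd (tm2 \<delta> a x s) \<in> lists D" if "s \<in> lists D" for s
    proof (cases s)
      case Nil then show ?thesis by (simp add: Suc tm2_def X_def)
    next
      case (Cons z s0)
      with that have z: "z \<in> D" "s0 \<in> lists D" by auto
      show ?thesis
      proof (cases "\<delta> q a z")
        case None then show ?thesis using Cons that by (simp add: Suc tm2_def X_def)
      next
        case (Some r)
        obtain q1 u where r: "r = (q1, u)" by (cases r)
        have "q1 \<in> Q \<and> set u \<subseteq> D" proof -
          have "case \<delta> q a z of None \<Rightarrow> True | Some (q', u) \<Rightarrow> q' \<in> Q \<and> set u \<subseteq> D"
            using cl q z(1) by blast
          then show ?thesis using Some r by simp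
        qed
        then show ?thesis using Cons z Some r by (auto simp: Suc tm2_def X_def)
      qed
    qed
    have c2: "\<forall>w\<in>lists D. \<forall>u\<in>lists D. length w = 1 \<longrightarrow>
            fst (tm2 \<delta> a x (w @ u)) = fst (tm2 \<delta> a x w) \<and> snd (tm2 \<delta> a x (w @ u)) = snd (tm2 \<delta> a x w) @ u"
    proof (intro ballI impI)
      fix w u :: "nat list" assume "length w = 1"
      then obtain z where "w = [z]" by (cases w) auto
      then show "fst (tm2 \<delta> a x (w @ u)) = fst (tm2 \<delta> a x w) \<and> snd (tm2 \<delta> a x (w @ u)) = snd (tm2 \<delta> a x w) @ u"
        by (auto simp: Suc tm2_def split: option.splits)
    qed
    show ?thesis unfolding inT_def using c1 c2 by blast
  qed
  have sa: "stack_aut X D om (tm2 \<delta>)"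
  proof -
    have "inB D (om x)" for x unfolding inB_def by (intro exI[of _ 0]) (simp add: om_def split: nat.splits)
    moreover have "finite X" using fin by (simp add: X_def)
    ultimately show ?thesis unfolding stack_aut_def using fin inT by blast
  qed
  have "L = {w. trace_sem om (tm2 \<delta>) (Suc q0) w [z0]}"
  proof -
    have "(case dpda_run \<delta> w (q0, [z0]) of None \<Rightarrow> False | Some (q, _) \<Rightarrow> q \<in> F) =
          trace_sem om (tm2 \<delta>) (Suc q0) w [z0]" for w
    proof (cases "dpda_run \<delta> w (q0, [z0])")
      case None
      then have "fst (tr (tm2 \<delta>) w (Suc q0, [z0])) = 0" using tr2_run[of \<delta> w q0 "[z0]"] by simp
      then show ?thesis using None by (simp add: trace_sem_tr om_def Let_def)
    next
      case (Some c)
      obtain q s where c: "c = (q, s)" by (cases c)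
      then have "tr (tm2 \<delta>) w (Suc q0, [z0]) = (Suc q, s)" using tr2_run[of \<delta> w q0 "[z0]"] Some by simp
      then show ?thesis using Some c by (simp add: trace_sem_tr om_def Let_def)
    qed
    then show ?thesis by (auto simp: L dpda_lang_def)
  qed
  moreover have "Suc q0 \<in> X" using q0 by (simp add: X_def)
  ultimately show ?thesis using sa z0
    by (intro exI[of _ X] exI[of _ D] exI[of _ om] exI[of _ "tm2 \<delta>"] exI[of _ "Suc q0"] exI[of _ z0] conjI)
qed


fun chunks :: "nat \<Rightarrow> 'g list \<Rightarrow> 'g list list" where
  "chunks K v = (if K = 0 \<or> length v < 2 * K then [v] else take K v # chunks K (drop K v))"

declare chunks.simps[simp del]

lemma chunks_concat: "concat (chunks K v) = v"
  by (induction K v rule: chunks.induct) (subst chunks.simps, auto)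

lemma chunks_ne: "chunks K v \<noteq> []"
  by (subst chunks.simps) auto

lemma chunks_len: "1 \<le> K \<Longrightarrow> c \<in> set (chunks K v) \<Longrightarrow> length c < 2 * K"
proof (induction K v rule: chunks.induct)
  case (1 K v)
  show ?case
  proof (cases "length v < 2 * K")
    case True then show ?thesis using 1 by (simp add: chunks.simps[of K v])
  next
    case False
    then have "c = take K v \<or> c \<in> set (chunks K (drop K v))" using 1 by (simp add: chunks.simps[of K v])
    then show ?thesis using 1 False by auto
  qed
qed

lemma chunks_len_ge: "1 \<le> K \<Longrightarrow> K \<le> length v \<Longrightarrow> c \<in> set (chunks K v) \<Longrightarrow> K \<le> length c"
proof (induction K v rule: chunks.induct)
  case (1 K v)
  show ?case
  proof (cases "length v < 2 * K")
    case True then show ?thesis using 1 by (simp add: chunks.simps[of K v])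
  next
    case False
    then have "c = take K v \<or> c \<in> set (chunks K (drop K v))" using 1 by (simp add: chunks.simps[of K v])
    then show ?thesis using 1 False by auto
  qed
qed

lemma chunks_hd_ge: "1 \<le> K \<Longrightarrow> K \<le> length v \<Longrightarrow> K \<le> length (hd (chunks K v))"
  using chunks_len_ge[of K v "hd (chunks K v)"] chunks_ne[of K v] by simp

lemma chunks_tl: "1 \<le> K \<Longrightarrow> c \<in> set (tl (chunks K v)) \<Longrightarrow> K \<le> length c \<and> length c < 2 * K"
proof -
  assume K: "1 \<le> K" and c: "c \<in> set (tl (chunks K v))"
  show ?thesis
  proof (cases "length v < 2 * K")
    case True then show ?thesis using c K by (simp add: chunks.simps[of K v])
  next
    case False
    then have "c \<in> set (chunks K (drop K v))" using c K by (simp add: chunks.simps[of K v])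
    moreover have "K \<le> length (drop K v)" using False by simp
    ultimately show ?thesis using chunks_len[OF K] chunks_len_ge[OF K] by blast
  qed
qed

lemma chunks_hd_K: "1 \<le> K \<Longrightarrow> tl (chunks K v) \<noteq> [] \<Longrightarrow> length (hd (chunks K v)) = K"
proof -
  assume K: "1 \<le> K" and t: "tl (chunks K v) \<noteq> []"
  show ?thesis
  proof (cases "length v < 2 * K")
    case True then show ?thesis using t K by (simp add: chunks.simps[of K v])
  next
    case False then show ?thesis using K by (simp add: chunks.simps[of K v])
  qed
qed

lemma chunks_set: "c \<in> set (chunks K v) \<Longrightarrow> set c \<subseteq> set v"
  using chunks_concat[of K v] by (metis concat_append in_set_conv_decomp set_append sup_ge1 sup.coboundedI2 concat.simps(2))


lemma concat_lists: "\<forall>c\<in>set cs. c \<in> lists G \<and> P c \<Longrightarrow> concat cs \<in> lists G"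
  by (induction cs) auto

locale sa1 =
  fixes X :: "'x set" and G :: "'g set" and om :: "'x \<Rightarrow> 'g list \<Rightarrow> bool"
    and tm :: "'a \<Rightarrow> 'x \<Rightarrow> 'g list \<Rightarrow> 'x \<times> 'g list" and K :: nat
  assumes finX: "finite X" and finG: "finite G" and K1: "1 \<le> K"
  and tmX: "\<And>a x s. x \<in> X \<Longrightarrow> s \<in> lists G \<Longrightarrow> fst (tm a x s) \<in> X \<and> snd (tm a x s) \<in> lists G"
  and tmK: "\<And>a x w u. x \<in> X \<Longrightarrow> w \<in> lists G \<Longrightarrow> u \<in> lists G \<Longrightarrow> K \<le> length w \<Longrightarrow>
              tm a x (w @ u) = (fst (tm a x w), snd (tm a x w) @ u)"
  and omK: "\<And>x w u. x \<in> X \<Longrightarrow> w \<in> lists G \<Longrightarrow> u \<in> lists G \<Longrightarrow> K \<le> length w \<Longrightarrow> om x (w @ u) = om x w"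
begin

lemma tm_len: "x \<in> X \<Longrightarrow> w \<in> lists G \<Longrightarrow> K \<le> length w \<Longrightarrow> length w - K \<le> length (snd (tm a x w))"
proof -
  assume x: "x \<in> X" and w: "w \<in> lists G" and K: "K \<le> length w"
  have "tm a x w = tm a x (take K w @ drop K w)" by simp
  also have "\<dots> = (fst (tm a x (take K w)), snd (tm a x (take K w)) @ drop K w)"
    using tmK[OF x, of "take K w" "drop K w" a] w K by (auto dest: in_set_takeD in_set_dropD)
  finally show ?thesis by simp
qed

definition \<delta>1 :: "('x \<times> 'g list) \<Rightarrow> 'a \<Rightarrow> 'g list option \<Rightarrow> (('x \<times> 'g list) \<times> 'g list option list) option" where
  "\<delta>1 q a z = (case z of
      None \<Rightarrow> Some ((fst (tm a (fst q) (snd q)), hd (chunks K (snd (tm a (fst q) (snd q))))),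
                    map Some (tl (chunks K (snd (tm a (fst q) (snd q))))) @ [None])
    | Some blk \<Rightarrow> Some ((fst (tm a (fst q) (snd q @ blk)), hd (chunks K (snd (tm a (fst q) (snd q @ blk))))),
                    map Some (tl (chunks K (snd (tm a (fst q) (snd q @ blk)))))))"

definition Inv :: "'x \<Rightarrow> 'g list \<Rightarrow> 'g list list \<Rightarrow> bool" where
  "Inv x b blks \<longleftrightarrow> x \<in> X \<and> b \<in> lists G \<and> length b < 2 * K \<and>
     (\<forall>c\<in>set blks. c \<in> lists G \<and> K \<le> length c \<and> length c < 2 * K) \<and> (blks \<noteq> [] \<longrightarrow> K \<le> length b)"

lemma chunk_facts:
  assumes "v \<in> lists G"
  shows "hd (chunks K v) \<in> lists G" "length (hd (chunks K v)) < 2 * K"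
    "\<forall>c\<in>set (tl (chunks K v)). c \<in> lists G \<and> K \<le> length c \<and> length c < 2 * K"
    "tl (chunks K v) \<noteq> [] \<Longrightarrow> length (hd (chunks K v)) = K"
    "v = hd (chunks K v) @ concat (tl (chunks K v))"
proof -
  have ne: "chunks K v = hd (chunks K v) # tl (chunks K v)" using chunks_ne[of K v] by simp
  have hs: "hd (chunks K v) \<in> set (chunks K v)" using chunks_ne[of K v] by simp
  show "hd (chunks K v) \<in> lists G" using chunks_set[OF hs] assms by auto
  show "length (hd (chunks K v)) < 2 * K" using chunks_len[OF K1 hs] .
  show "\<forall>c\<in>set (tl (chunks K v)). c \<in> lists G \<and> K \<le> length c \<and> length c < 2 * K"
  proof
    fix c assume c: "c \<in> set (tl (chunks K v))"
    then have "c \<in> set (chunks K v)" using ne by (metis list.set_intros(2))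
    then have "set c \<subseteq> set v" by (rule chunks_set)
    then show "c \<in> lists G \<and> K \<le> length c \<and> length c < 2 * K" using assms chunks_tl[OF K1 c] by auto
  qed
  show "tl (chunks K v) \<noteq> [] \<Longrightarrow> length (hd (chunks K v)) = K" using chunks_hd_K[OF K1] by blast
  show "v = hd (chunks K v) @ concat (tl (chunks K v))"
    using chunks_concat[of K v] ne by (metis concat.simps(2))
qed

lemma step_sim:
  assumes I: "Inv x b blks"
  shows "\<exists>x' b' blks'. dpda_step \<delta>1 a ((x, b), map Some blks @ [None]) = Some ((x', b'), map Some blks' @ [None])
     \<and> Inv x' b' blks' \<and> tm a x (b @ concat blks) = (x', b' @ concat blks')"
proof (cases blks)
  case Nil
  define p where "p = tm a x b"
  define c where "c = chunks K (snd p)"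
  have px: "fst p \<in> X" "snd p \<in> lists G" using tmX[of x b a] I by (auto simp: Inv_def p_def)
  note cf = chunk_facts[OF px(2), folded c_def]
  have "dpda_step \<delta>1 a ((x, b), map Some blks @ [None]) = Some ((fst p, hd c), map Some (tl c) @ [None])"
    using Nil by (simp add: \<delta>1_def p_def c_def)
  moreover have "Inv (fst p) (hd c) (tl c)" using px cf by (auto simp: Inv_def)
  moreover have "tm a x (b @ concat blks) = (fst p, hd c @ concat (tl c))"
  proof -
    have "(fst p, hd c @ concat (tl c)) = p" by (simp add: cf(5)[symmetric])
    then show ?thesis using Nil by (simp add: p_def)
  qed
  ultimately show ?thesis by blast
next
  case (Cons c0 rest)
  define p where "p = tm a x (b @ c0)"
  define c where "c = chunks K (snd p)"
  have b: "x \<in> X" "b \<in> lists G" "c0 \<in> lists G" "K \<le> length c0" "concat rest \<in> lists G"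
    "rest \<noteq> [] \<longrightarrow> K \<le> length b" "\<forall>c\<in>set rest. c \<in> lists G \<and> K \<le> length c \<and> length c < 2 * K"
    using I Cons concat_lists[of rest G] by (auto simp: Inv_def)
  have px: "fst p \<in> X" "snd p \<in> lists G" using tmX[of x "b @ c0" a] b by (auto simp: p_def)
  note cf = chunk_facts[OF px(2), folded c_def]
  have len: "length b \<le> length (snd p)" using tm_len[of x "b @ c0" a] b by (simp add: p_def)
  have "dpda_step \<delta>1 a ((x, b), map Some blks @ [None]) = Some ((fst p, hd c), map Some (tl c @ rest) @ [None])"
    using Cons by (simp add: \<delta>1_def p_def c_def)
  moreover have "Inv (fst p) (hd c) (tl c @ rest)"
  proof -
    have "tl c @ rest \<noteq> [] \<longrightarrow> K \<le> length (hd c)"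
    proof
      assume ne: "tl c @ rest \<noteq> []"
      show "K \<le> length (hd c)"
      proof (cases "tl c = []")
        case False then show ?thesis using cf(4) by simp
      next
        case True
        then have "K \<le> length b" using ne b(6) by simp
        then show ?thesis using chunks_hd_ge[OF K1, of "snd p"] len c_def by simp
      qed
    qed
    then show ?thesis using px cf b(7) by (auto simp: Inv_def)
  qed
  moreover have "tm a x (b @ concat blks) = (fst p, hd c @ concat (tl c @ rest))"
  proof -
    have "tm a x (b @ concat blks) = tm a x ((b @ c0) @ concat rest)" using Cons by simp
    also have "\<dots> = (fst p, snd p @ concat rest)" using tmK[of x "b @ c0" "concat rest" a] b
      by (simp add: p_def)
    finally show ?thesis using cf(5) by simp
  qed
  ultimately show ?thesis by blast
qed

lemma run_sim:
  "Inv x b blks \<Longrightarrow> \<exists>x' b' blks'. dpda_run \<delta>1 w ((x, b), map Some blks @ [None]) = Some ((x', b'), map Some blks' @ [None])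
     \<and> Inv x' b' blks' \<and> tr tm w (x, b @ concat blks) = (x', b' @ concat blks')"
proof (induction w arbitrary: x b blks)
  case Nil then show ?case by auto
next
  case (Cons a w)
  obtain x1 b1 blks1 where s: "dpda_step \<delta>1 a ((x, b), map Some blks @ [None]) = Some ((x1, b1), map Some blks1 @ [None])"
    and I1: "Inv x1 b1 blks1" and t: "tm a x (b @ concat blks) = (x1, b1 @ concat blks1)"
    using step_sim[OF Cons.prems, of a] by blast
  obtain x' b' blks' where r: "dpda_run \<delta>1 w ((x1, b1), map Some blks1 @ [None]) = Some ((x', b'), map Some blks' @ [None])"
    and I': "Inv x' b' blks'" and t': "tr tm w (x1, b1 @ concat blks1) = (x', b' @ concat blks')"
    using Cons.IH[OF I1] by blast
  show ?case using s r I' t t' by auto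
qed

definition Q1 where "Q1 = X \<times> {b. set b \<subseteq> G \<and> length b \<le> 2 * K}"
definition D1 where "D1 = insert None (Some ` {b. set b \<subseteq> G \<and> length b \<le> 2 * K})"
definition F1 where "F1 = {q \<in> Q1. om (fst q) (snd q)}"

lemma inD1: "c \<in> lists G \<Longrightarrow> length c < 2 * K \<Longrightarrow> Some c \<in> D1"
  unfolding D1_def by (intro insertI2 imageI) auto

lemma inQ1: "x \<in> X \<Longrightarrow> b \<in> lists G \<Longrightarrow> length b < 2 * K \<Longrightarrow> (x, b) \<in> Q1"
  unfolding Q1_def by auto

lemma set_ms: "\<forall>c\<in>set cs. c \<in> lists G \<and> K \<le> length c \<and> length c < 2 * K \<Longrightarrow> set (map Some cs) \<subseteq> D1"
  using inD1 by auto

lemma lang_eq: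
  assumes x0: "x0 \<in> X" and g0: "\<gamma>0 \<in> G"
  shows "{w. trace_sem om tm x0 w [\<gamma>0]} = dpda_lang \<delta>1 (x0, [\<gamma>0]) None F1"
proof -
  have I0: "Inv x0 [\<gamma>0] []" using x0 g0 K1 by (simp add: Inv_def)
  have "trace_sem om tm x0 w [\<gamma>0] = (case dpda_run \<delta>1 w ((x0, [\<gamma>0]), [None]) of None \<Rightarrow> False | Some (q, _) \<Rightarrow> q \<in> F1)" for w
  proof -
    obtain x' b' blks' where r: "dpda_run \<delta>1 w ((x0, [\<gamma>0]), map Some [] @ [None]) = Some ((x', b'), map Some blks' @ [None])"
      and I': "Inv x' b' blks'" and t': "tr tm w (x0, [\<gamma>0] @ concat []) = (x', b' @ concat blks')"
      using run_sim[OF I0, of w] by blast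
    have om: "om x' (b' @ concat blks') = om x' b'"
    proof (cases "blks' = []")
      case True then show ?thesis by simp
    next
      case False
      have "concat blks' \<in> lists G" using I' concat_lists[of blks' G] by (auto simp: Inv_def)
      then show ?thesis using False I' omK[of x' b' "concat blks'"] by (auto simp: Inv_def)
    qed
    have "(x', b') \<in> Q1" using I' by (auto simp: Inv_def Q1_def)
    then show ?thesis using r t' om by (simp add: trace_sem_tr F1_def)
  qed
  then show ?thesis by (auto simp: dpda_lang_def)
qed

lemma rt: assumes x0: "x0 \<in> X" and g0: "\<gamma>0 \<in> G"
  shows "rt_dcfl {w. trace_sem om tm x0 w [\<gamma>0]}"
proof -
  have fQ: "finite Q1" unfolding Q1_def using finX finite_lists_length_le[OF finG] by simp
  have fD: "finite D1" unfolding D1_def using finite_lists_length_le[OF finG] by simp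
  have q0: "(x0, [\<gamma>0]) \<in> Q1" using x0 g0 K1 by (simp add: Q1_def)
  have z0: "None \<in> D1" by (simp add: D1_def)
  have F: "F1 \<subseteq> Q1" by (auto simp: F1_def)
  have cl: "\<forall>q\<in>Q1. \<forall>a. \<forall>z\<in>D1. case \<delta>1 q a z of None \<Rightarrow> True
                                     | Some (q', u) \<Rightarrow> q' \<in> Q1 \<and> set u \<subseteq> D1"
  proof (intro ballI allI)
    fix q a z assume q: "q \<in> Q1" and z: "z \<in> D1"
    obtain x b where qq: "q = (x, b)" by (cases q)
    have xb: "x \<in> X" "b \<in> lists G" using q qq by (auto simp: Q1_def)
    show "case \<delta>1 q a z of None \<Rightarrow> True | Some (q', u) \<Rightarrow> q' \<in> Q1 \<and> set u \<subseteq> D1"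
    proof (cases z)
      case None
      define p where "p = tm a x b"
      have px: "fst p \<in> X" "snd p \<in> lists G" using tmX[of x b a] xb by (auto simp: p_def)
      note cf = chunk_facts[OF px(2)]
      have "set (map Some (tl (chunks K (snd p))) @ [None]) \<subseteq> D1" using set_ms[OF cf(3)] by (simp add: D1_def)
      moreover have "(fst p, hd (chunks K (snd p))) \<in> Q1" using inQ1 px cf by blast
      ultimately show ?thesis using None by (simp add: \<delta>1_def qq p_def[symmetric])
    next
      case (Some blk)
      have "blk \<in> lists G" using z Some by (auto simp: D1_def)
      define p where "p = tm a x (b @ blk)"
      have px: "fst p \<in> X" "snd p \<in> lists G" using tmX[of x "b @ blk" a] xb \<open>blk \<in> lists G\<close> by (auto simp: p_def)
      note cf = chunk_facts[OF px(2)]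
      have "set (map Some (tl (chunks K (snd p)))) \<subseteq> D1" using set_ms[OF cf(3)] by simp
      moreover have "(fst p, hd (chunks K (snd p))) \<in> Q1" using inQ1 px cf by blast
      ultimately show ?thesis using Some by (simp add: \<delta>1_def qq p_def[symmetric])
    qed
  qed
  show ?thesis using rename_rt[OF fQ fD q0 z0 F cl] lang_eq[OF x0 g0] by simp
qed

end


lemma dir1:
  fixes X :: "'x set" and G :: "'g set" and om :: "'x \<Rightarrow> 'g list \<Rightarrow> bool"
    and tm :: "'a::finite \<Rightarrow> 'x \<Rightarrow> 'g list \<Rightarrow> 'x \<times> 'g list"
  assumes sa: "stack_aut X G om tm" and x0: "x0 \<in> X" and g0: "\<gamma>0 \<in> G"
  shows "rt_dcfl {w. trace_sem om tm x0 w [\<gamma>0]}"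
proof -
  have finX: "finite X" and finG: "finite G" and oB: "\<And>x. x \<in> X \<Longrightarrow> inB G (om x)"
    and tT: "\<And>a x. x \<in> X \<Longrightarrow> inT X G (tm a x)"
    using sa by (auto simp: stack_aut_def)
  define PT where "PT = (\<lambda>a x k. \<forall>w\<in>lists G. \<forall>u\<in>lists G. length w = k \<longrightarrow>
            fst (tm a x (w @ u)) = fst (tm a x w) \<and> snd (tm a x (w @ u)) = snd (tm a x w) @ u)"
  define PO where "PO = (\<lambda>x k. \<forall>w\<in>lists G. \<forall>u\<in>lists G. length w \<ge> k \<longrightarrow> om x (w @ u) = om x w)"
  define kt where "kt = (\<lambda>a x. SOME k. PT a x k)"
  define ko where "ko = (\<lambda>x. SOME k. PO x k)"
  have kt: "PT a x (kt a x)" if "x \<in> X" for a x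
  proof -
    have "\<exists>k. PT a x k" using tT[OF that, of a] unfolding inT_def PT_def by blast
    then show ?thesis unfolding kt_def by (rule someI_ex)
  qed
  have ko: "PO x (ko x)" if "x \<in> X" for x
  proof -
    have "\<exists>k. PO x k" using oB[OF that] unfolding inB_def PO_def by blast
    then show ?thesis unfolding ko_def by (rule someI_ex)
  qed
  define S where "S = insert 1 ((\<lambda>p. kt (fst p) (snd p)) ` (UNIV \<times> X) \<union> ko ` X)"
  define K where "K = Max S"
  have finS: "finite S" unfolding S_def using finX by simp
  have K1: "1 \<le> K" unfolding K_def using finS by (simp add: S_def)
  have ktK: "kt a x \<le> K" if "x \<in> X" for a x
  proof -
    have "kt a x \<in> S" unfolding S_def using that by (intro insertI2 UnI1 rev_image_eqI[of "(a, x)"]) auto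
    then show ?thesis unfolding K_def using finS by (rule Max_ge[rotated])
  qed
  have koK: "ko x \<le> K" if "x \<in> X" for x
    unfolding K_def using finS that by (intro Max_ge) (auto simp: S_def)
  interpret sa1 X G om tm K
  proof
    show "finite X" "finite G" "1 \<le> K" by (fact finX, fact finG, fact K1)
  next
    fix a x s assume x: "x \<in> X" and s: "s \<in> lists G"
    show "fst (tm a x s) \<in> X \<and> snd (tm a x s) \<in> lists G"
      using conjunct1[OF tT[OF x, of a, unfolded inT_def]] s by (rule bspec)
  next
    fix a x w u assume x: "x \<in> X" and w: "w \<in> lists G" and u: "u \<in> lists G" and Kw: "K \<le> length w"
    define k where "k = kt a x"
    have P: "PT a x k" using kt[OF x] by (simp add: k_def)
    have kw: "k \<le> length w" using ktK[OF x, of a] Kw by (simp add: k_def)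
    have tw: "take k w \<in> lists G" "drop k w \<in> lists G" "length (take k w) = k"
      using w kw by (auto dest: in_set_takeD in_set_dropD)
    have du: "drop k w @ u \<in> lists G" using tw u by simp
    have e1: "tm a x (w @ u) = tm a x (take k w @ (drop k w @ u))" by (metis append_assoc append_take_drop_id)
    have e2: "tm a x w = tm a x (take k w @ drop k w)" by simp
    note A = P[unfolded PT_def, rule_format, OF tw(1) du tw(3)]
    note B = P[unfolded PT_def, rule_format, OF tw(1) tw(2) tw(3)]
    show "tm a x (w @ u) = (fst (tm a x w), snd (tm a x w) @ u)"
      unfolding e1 e2 using A B by (simp add: prod_eq_iff)
  next
    fix x w u assume x: "x \<in> X" and w: "w \<in> lists G" and u: "u \<in> lists G" and Kw: "K \<le> length w"
    have "ko x \<le> length w" using koK[OF x] Kw by simp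
    then show "om x (w @ u) = om x w" using ko[OF x, unfolded PO_def, rule_format, OF w u] by blast
  qed
  show ?thesis by (rule rt[OF x0 g0])
qed

theorem mainTheorem5:
  shows "(\<forall>(X::'x set) (G::'g set) (om::'x \<Rightarrow> 'g list \<Rightarrow> bool)
             (tm::'a::finite \<Rightarrow> 'x \<Rightarrow> 'g list \<Rightarrow> 'x \<times> 'g list) x0 \<gamma>0.
            stack_aut X G om tm \<and> x0 \<in> X \<and> \<gamma>0 \<in> G \<longrightarrow>
            rt_dcfl {w. trace_sem om tm x0 w [\<gamma>0]})
       \<and> (\<forall>L::'a list set. rt_dcfl L \<longrightarrow>
            (\<exists>(X::nat set) (G::nat set) om tm x0 \<gamma>0.
               stack_aut X G om tm \<and> x0 \<in> X \<and> \<gamma>0 \<in> G \<and>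
               L = {w. trace_sem om tm x0 w [\<gamma>0]}))"
proof (intro conjI allI impI)
  fix X :: "'x set" and G :: "'g set" and om :: "'x \<Rightarrow> 'g list \<Rightarrow> bool"
    and tm :: "'a::finite \<Rightarrow> 'x \<Rightarrow> 'g list \<Rightarrow> 'x \<times> 'g list" and x0 \<gamma>0
  assume "stack_aut X G om tm \<and> x0 \<in> X \<and> \<gamma>0 \<in> G"
  then show "rt_dcfl {w. trace_sem om tm x0 w [\<gamma>0]}" using dir1[of X G om tm x0 \<gamma>0] by blast
next
  fix L :: "'a list set" assume "rt_dcfl L"
  then show "\<exists>(X::nat set) (G::nat set) om tm x0 \<gamma>0.
               stack_aut X G om tm \<and> x0 \<in> X \<and> \<gamma>0 \<in> G \<and>
               L = {w. trace_sem om tm x0 w [\<gamma>0]}" by (rule dir2)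
qed

end
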